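(* Fix parameters $\ell_r>0$, $\ell_f>0$, $\bar r>0$, $\sigma\in(0,1)$, $\beta_{\max}>0$ and a sampling period $T>0$. Consider the kinematic bicycle model (KBM) with state $\chi=(r,\xi,v)\in\mathbb{R}^3$, $r>0$, and control $\omega=(a,\beta)\in\Omega_{\text{admis.}}:=\mathbb{R}\times[-\beta_{\max},\beta_{\max}]$, with dynamics $\dot\chi=f_{\text{KBM}}(\chi,\omega)$, where $$\dot r = v\cos(\xi-\beta),\qquad \dot\xi=-\tfrac{1}{r}v\sin(\xi-\beta)-\tfrac{v}{\ell_r}\sin(\beta),\qquad \dot v=a,$$ and let $h_{\bar r,\sigma}(\chi)=\frac{\sigma\cos(\xi/2)+1-\sigma}{\bar r}-\frac{1}{r}$. Let $\chi[n_0-1]$ be a state with $h_{\bar r,\sigma}(\chi[n_0-1])>0$ and let $\omega[n_0]\in\Omega_{\text{admis.}}$ be a fixed control. Let $\zeta:[0,\infty)\to\mathbb{R}^3$ be the solution of $\dot\zeta(t)=f_{\text{KBM}}(\zeta(t),\omega[n_0])$, $\zeta(0)=\chi[n_0-1]$ (i.e. the constant control $\omega[n_0]$ is applied, zero-order hold, starting from $\chi[n_0-1]$), so that the discretized KBM states are $\chi[n_0-1+n]=\zeta(nT)$ for $n\ge 0$. Let $\mathcal D\subseteq\{\chi: r>0\}$ be a set containing this trajectory on the relevant time interval, and let $L_{h_{\bar r,\sigma}}$ and $L_{f_{\text{KBM}}}$ be upper bounds on the Lipschitz constants (with respect to the Euclidean norm) on $\mathcal D$ of $h_{\bar r,\sigma}$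 and of $\chi\mapsto f_{\text{KBM}}(\chi,\omega[n_0])$, respectively. Let $\nu=\nu(\chi[n_0-1],\omega[n_0])>0$ solve $$\sqrt{2}\cdot L_{h_{\bar r,\sigma}}\cdot\lVert f_{\text{KBM}}(\chi[n_0-1],\omega[n_0])\rVert_2\cdot\nu\cdot e^{L_{f_{\text{KBM}}}\cdot\nu}=h_{\bar r,\sigma}(\chi[n_0-1]),$$ and define $$\Delta_{\max}(\chi[n_0-1],\omega[n_0]):=\max\big(\lfloor \nu/T\rfloor-1,\,0\big).$$ Then for every integer $n$ with $0\le n\le \Delta_{\max}(\chi[n_0-1],\omega[n_0])$ we have $h_{\bar r,\sigma}(\chi[n_0-1+n])>0$; i.e. holding the constant control $\omega[n_0]$ from state $\chi[n_0-1]$ preserves $h_{\bar r,\sigma}>0$ for at least $\Delta_{\max}$ samples.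
   Context: The KBM models an autonomous vehicle relative to a fixed point obstacle at the origin: $r$ is the distance to the origin, $\xi$ the orientation of the vehicle relative to the direction to the origin, $v$ the speed, $a$ the acceleration input and $\beta$ a (reparametrized) steering input. The set of safe states is $\{\chi: h_{\bar r,\sigma}(\chi)\ge 0\}$, which excludes a disk of radius $\bar r$ about the origin. Discrete-time signals are samples $x[n]=x(nT)$ of continuous-time signals, and inputs are applied with zero-order hold over each sampling period. $\lVert\cdot\rVert_2$ denotes the Euclidean norm on $\mathbb{R}^3$. *)

theory Defs
  imports "HOL-Analysis.Analysis"
begin

text \<open>States chi = (r, xi, v) are triples in real \<times> real \<times> real; the product norm
  on this type is the Euclidean norm on R^3.  Controls omega = (a, beta).\<close>

type_synonym kbm_state = "real \<times> real \<times> real"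
type_synonym kbm_input = "real \<times> real"

definition f_KBM :: "real \<Rightarrow> kbm_state \<Rightarrow> kbm_input \<Rightarrow> kbm_state" where
  "f_KBM l_r chi omega =
     (case chi of (r, xi, v) \<Rightarrow> case omega of (a, beta) \<Rightarrow>
       (v * cos (xi - beta),
        - (1 / r) * v * sin (xi - beta) - (v / l_r) * sin beta,
        a))"

definition h_cbf :: "real \<Rightarrow> real \<Rightarrow> kbm_state \<Rightarrow> real" where
  "h_cbf rbar sig chi =
     (case chi of (r, xi, v) \<Rightarrow> (sig * cos (xi / 2) + 1 - sig) / rbar - 1 / r)"

definition Omega_admis :: "real \<Rightarrow> kbm_input set" where
  "Omega_admis beta_max = UNIV \<times> {- beta_max .. beta_max}"

definition Delta_max :: "real \<Rightarrow> real \<Rightarrow> int" where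
  "Delta_max nu T = max (\<lfloor>nu / T\<rfloor> - 1) 0"

end

theory Submission
  imports Defs
begin
lemma sgn_inner_self: "sgn (x::'a::real_inner) \<bullet> x = norm x"
proof (cases "x = 0")
  case False
  have "sgn x \<bullet> x = (x \<bullet> x) / norm x" by (simp add: sgn_div_norm divide_inverse)
  also have "\<dots> = norm x" using False by (simp add: dot_square_norm power2_eq_square)
  finally show ?thesis .
qed simp

lemma gronwall_like:
  fixes z :: "real \<Rightarrow> 'a::real_inner" and F :: "'a \<Rightarrow> 'a"
  assumes tau: "0 \<le> tau" and eps: "0 < eps" and L: "0 \<le> L"
    and cont: "continuous_on {0..tau} z"
    and deriv: "\<And>s. 0 < s \<Longrightarrow> s < tau \<Longrightarrow> (z has_vector_derivative F (z s)) (at s)"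
    and lip: "\<And>s. 0 \<le> s \<Longrightarrow> s \<le> tau \<Longrightarrow> norm (F (z s) - F (z 0)) \<le> L * norm (z s - z 0)"
    and t: "0 \<le> t" "t \<le> tau"
  shows "norm (z t - z 0) < (norm (F (z 0)) * t + eps) * exp (L * t)"
proof (rule ccontr)
  define K where "K = norm (F (z 0))"
  define g where "g s = (K * s + eps) * exp (L * s)" for s
  define u where "u s = norm (z s - z 0)" for s
  have K: "K \<ge> 0" by (simp add: K_def)
  have gcont: "continuous_on A g" for A unfolding g_def by (intro continuous_intros)
  have ucont: "continuous_on {0..tau} u" unfolding u_def using cont by (intro continuous_intros)
  define S where "S = {s \<in> {0..tau}. g s \<le> u s}"
  assume "\<not> ?thesis"
  hence "t \<in> S" using t by (auto simp: S_def g_def u_def K_def)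
  hence Sne: "S \<noteq> {}" by auto
  have Sbdd: "bdd_below S" unfolding S_def by (auto intro: bdd_belowI[of _ 0])
  have Scl: "closed S" unfolding S_def
    by (rule continuous_on_closed_Collect_le[OF gcont ucont]) auto
  define t1 where "t1 = Inf S"
  have t1S: "t1 \<in> S" unfolding t1_def using closed_contains_Inf[OF Sne Sbdd Scl] .
  have below: "u s < g s" if "0 \<le> s" "s < t1" for s
  proof (rule ccontr)
    assume "\<not> u s < g s"
    hence "s \<in> S" using that t1S by (auto simp: S_def)
    hence "t1 \<le> s" unfolding t1_def using Sbdd by (rule cInf_lower)
    thus False using that by simp
  qed
  have t1pos: "0 < t1"
  proof -
    have "t1 \<ge> 0" using t1S by (auto simp: S_def)
    moreover have "t1 \<noteq> 0" using t1S eps by (auto simp: S_def g_def u_def)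
    ultimately show ?thesis by simp
  qed
  have t1tau: "t1 \<le> tau" using t1S by (auto simp: S_def)
  define e where "e = sgn (z t1 - z 0)"
  have enorm: "norm e \<le> 1" by (simp add: e_def norm_sgn)
  have einner: "e \<bullet> (z t1 - z 0) = u t1"
    unfolding e_def u_def by (rule sgn_inner_self)
  define phi where "phi s = e \<bullet> (z s - z 0) - g s" for s
  have "phi t1 \<le> phi 0"
  proof (rule DERIV_nonpos_imp_decreasing_open[OF less_imp_le[OF t1pos]])
    show "continuous_on {0..t1} phi" unfolding phi_def
      using continuous_on_subset[OF cont, of "{0..t1}"] t1tau gcont
      by (intro continuous_intros) auto
  next
    fix s assume s: "0 < s" "s < t1"
    have zd: "(z has_vector_derivative F (z s)) (at s)" using deriv s t1tau by simp
    have d1: "((\<lambda>s. e \<bullet> (z s - z 0)) has_real_derivative e \<bullet> F (z s)) (at s)"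
      using zd unfolding has_vector_derivative_def has_field_derivative_def
      by (auto intro!: derivative_eq_intros simp: inner_scaleR_right mult.commute)
    have d2: "(g has_real_derivative (K * exp (L * s) + L * g s)) (at s)"
      unfolding g_def by (auto intro!: derivative_eq_intros simp: algebra_simps)
    have "e \<bullet> F (z s) \<le> norm (F (z s))"
    proof -
      have "e \<bullet> F (z s) \<le> norm e * norm (F (z s))" by (rule norm_cauchy_schwarz)
      also have "\<dots> \<le> 1 * norm (F (z s))" by (rule mult_right_mono[OF enorm norm_ge_zero])
      finally show ?thesis by simp
    qed
    also have "\<dots> \<le> K + L * u s"
      using lip[of s] s t1tau norm_triangle_ineq[of "F (z s) - F (z 0)" "F (z 0)"]
      by (simp add: K_def u_def)
    also have "\<dots> \<le> K * exp (L * s) + L * g s"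
    proof -
      have "1 \<le> exp (L * s)" using L s by simp
      hence "K * 1 \<le> K * exp (L * s)" using K by (rule mult_left_mono)
      hence "K \<le> K * exp (L * s)" by simp
      moreover have "L * u s \<le> L * g s" using below[of s] s L
        by (simp add: mult_left_mono)
      ultimately show ?thesis by simp
    qed
    finally have le: "e \<bullet> F (z s) - (K * exp (L * s) + L * g s) \<le> 0" by simp
    show "\<exists>y. (phi has_real_derivative y) (at s) \<and> y \<le> 0"
      unfolding phi_def using DERIV_diff[OF d1 d2] le by blast
  qed
  hence "u t1 \<le> g t1 - g 0" using einner by (simp add: phi_def)
  moreover have "g 0 > 0" using eps by (simp add: g_def)
  ultimately have "u t1 < g t1" by simp
  thus False using t1S by (auto simp: S_def)
qed

theorem lemma2:
  fixes l_r l_f rbar sig beta_max T :: real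
    and chi :: "int \<Rightarrow> kbm_state" and n0 :: int
    and omega :: kbm_input
    and zeta :: "real \<Rightarrow> kbm_state"
    and D :: "kbm_state set"
    and L_h L_f nu :: real
  assumes "l_r > 0" and "l_f > 0" and "rbar > 0" and "0 < sig" and "sig < 1"
    and "beta_max > 0" and "T > 0"
    and chi0_r: "fst (chi (n0 - 1)) > 0"
    and chi0_safe: "h_cbf rbar sig (chi (n0 - 1)) > 0"
    and omega_adm: "omega \<in> Omega_admis beta_max"
    and zeta_init: "zeta 0 = chi (n0 - 1)"
    and zeta_ode: "\<And>t. t \<ge> 0 \<Longrightarrow>
          (zeta has_vector_derivative f_KBM l_r (zeta t) omega) (at t within {0..})"
    and samples: "\<And>n::nat. chi (n0 - 1 + int n) = zeta (real n * T)"
    and D_pos: "D \<subseteq> {x. fst x > 0}"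
    and D_traj: "\<And>t. 0 \<le> t \<Longrightarrow> t \<le> real_of_int (Delta_max nu T) * T \<Longrightarrow> zeta t \<in> D"
    and Lip_h: "L_h-lipschitz_on D (h_cbf rbar sig)"
    and Lip_f: "L_f-lipschitz_on D (\<lambda>x. f_KBM l_r x omega)"
    and nu_pos: "nu > 0"
    and nu_eq: "sqrt 2 * L_h * norm (f_KBM l_r (chi (n0 - 1)) omega) * nu * exp (L_f * nu)
                 = h_cbf rbar sig (chi (n0 - 1))"
  shows "\<forall>n::int. 0 \<le> n \<and> n \<le> Delta_max nu T \<longrightarrow> h_cbf rbar sig (chi (n0 - 1 + n)) > 0"
proof (intro allI impI)
  fix n :: int assume n: "0 \<le> n \<and> n \<le> Delta_max nu T"
  define F where "F x = f_KBM l_r x omega" for x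
  define x0 where "x0 = chi (n0 - 1)"
  define K where "K = norm (F x0)"
  define tau where "tau = real_of_int (Delta_max nu T) * T"
  define h0 where "h0 = h_cbf rbar sig x0"
  have h0pos: "h0 > 0" using chi0_safe by (simp add: h0_def x0_def)
  have Lh: "L_h \<ge> 0" using Lip_h by (rule lipschitz_on_nonneg)
  have Lf: "L_f \<ge> 0" using Lip_f by (rule lipschitz_on_nonneg)
  have eq: "sqrt 2 * (L_h * K) * nu * exp (L_f * nu) = h0"
    using nu_eq by (simp add: h0_def K_def F_def x0_def mult.assoc)
  have LK: "L_h * K > 0"
  proof -
    have "L_h * K \<noteq> 0" using eq h0pos by auto
    moreover have "L_h * K \<ge> 0" using Lh by (simp add: K_def)
    ultimately show ?thesis by (metis less_eq_real_def)
  qed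
  have Lhpos: "L_h > 0" and Kpos: "K > 0" using LK Lh by (auto simp: K_def zero_less_mult_iff)
  have Dm0: "Delta_max nu T \<ge> 0" by (simp add: Delta_max_def)
  have tau0: "tau \<ge> 0" using Dm0 \<open>T > 0\<close> by (simp add: tau_def)
  define t where "t = real_of_int n * T"
  have t0: "t \<ge> 0" using n \<open>T > 0\<close> by (simp add: t_def)
  have ttau: "t \<le> tau" using n \<open>T > 0\<close> by (simp add: t_def tau_def mult_right_mono)
  have tnu: "t < nu"
  proof (cases "\<lfloor>nu / T\<rfloor> - 1 \<ge> 0")
    case True
    hence "Delta_max nu T = \<lfloor>nu / T\<rfloor> - 1" by (simp add: Delta_max_def)
    hence "real_of_int (Delta_max nu T) \<le> nu / T - 1" by linarith
    hence "tau \<le> (nu / T - 1) * T" unfolding tau_def using \<open>T > 0\<close> by (simp add: mult_right_mono)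
    also have "\<dots> = nu - T" using \<open>T > 0\<close> by (simp add: field_simps)
    finally show ?thesis using ttau \<open>T > 0\<close> by simp
  next
    case False
    hence "Delta_max nu T = 0" by (simp add: Delta_max_def)
    hence "tau = 0" by (simp add: tau_def)
    thus ?thesis using ttau t0 nu_pos by simp
  qed
  have chin: "chi (n0 - 1 + n) = zeta t"
    using samples[of "nat n"] n by (simp add: t_def)
  have inD: "zeta s \<in> D" if "0 \<le> s" "s \<le> tau" for s using D_traj that by (simp add: tau_def)
  have cont: "continuous_on {0..tau} zeta"
  proof -
    have "continuous_on {0..} zeta"
      unfolding continuous_on_eq_continuous_within
      using has_vector_derivative_continuous[OF zeta_ode] by auto
    thus ?thesis by (rule continuous_on_subset) auto
  qed
  have deriv: "(zeta has_vector_derivative F (zeta s)) (at s)" if "0 < s" "s < tau" for s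
  proof -
    have "(zeta has_vector_derivative F (zeta s)) (at s within {0<..})"
      using has_vector_derivative_within_subset[OF zeta_ode[of s], of "{0<..}"] that
      by (simp add: F_def subset_eq)
    thus ?thesis using that by (subst (asm) has_vector_derivative_within_open) auto
  qed
  have lip: "norm (F (zeta s) - F (zeta 0)) \<le> L_f * norm (zeta s - zeta 0)" if "0 \<le> s" "s \<le> tau" for s
    using lipschitz_onD[OF Lip_f inD[OF that] inD[of 0]] tau0 by (simp add: F_def dist_norm)
  define eps where "eps = (sqrt 2 - 1) * K * nu"
  have eps: "eps > 0" using Kpos nu_pos by (simp add: eps_def)
  have u: "norm (zeta t - zeta 0) < (K * t + eps) * exp (L_f * t)"
    using gronwall_like[OF tau0 eps Lf cont deriv lip t0 ttau] zeta_init
    by (simp add: K_def x0_def)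
  have hlip: "\<bar>h_cbf rbar sig (zeta t) - h0\<bar> \<le> L_h * norm (zeta t - zeta 0)"
    using lipschitz_onD[OF Lip_h inD[OF t0 ttau] inD[of 0]] tau0 zeta_init
    by (simp add: h0_def x0_def dist_norm dist_real_def)
  have "L_h * norm (zeta t - zeta 0) < L_h * ((K * t + eps) * exp (L_f * t))"
    using u Lhpos by simp
  also have "\<dots> \<le> L_h * ((K * nu + eps) * exp (L_f * nu))"
  proof -
    have "K * t + eps \<le> K * nu + eps" using tnu Kpos by simp
    moreover have "exp (L_f * t) \<le> exp (L_f * nu)" using tnu Lf by (simp add: mult_left_mono)
    moreover have "0 \<le> K * t + eps" using Kpos t0 eps by simp
    ultimately show ?thesis using Lhpos by (intro mult_left_mono mult_mono) auto
  qed
  also have "\<dots> = h0" using eq by (simp add: eps_def algebra_simps)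
  finally have "L_h * norm (zeta t - zeta 0) < h0" .
  hence "h_cbf rbar sig (zeta t) > 0" using hlip by linarith
  thus "h_cbf rbar sig (chi (n0 - 1 + n)) > 0" using chin by simp
qed

end
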